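(* Let $r\in\mathbb N_{>0}$, let $\lambda\in\pi\mathbb N_{>0}$ or $\lambda\in\lambda_0+2\pi\mathbb Z$ with $\lambda_0\in\{\pi/3,\pi/2,2\pi/3\}$, and choose $\mu,\nu\in\mathbb R$ and $\xi_0=x_0+iy_0$ such that: (i) if $\lambda\in\pi\mathbb N_{>0}$: $\nu>0$ and $x_0,y_0\in\frac1r\mathbb Z$; (ii) if $\lambda\in\pi/2+2\pi\mathbb Z$: $\mu+i\nu=i$ and $x_0,y_0\in\frac1r\mathbb Z$; (iii) if $\lambda\in\pi/3+2\pi\mathbb Z$: $\mu+i\nu=e^{i\pi/3}$, $x_0\in\frac12+\frac1r\mathbb Z$, $y_0\in\frac1r\mathbb Z$; (iv) if $\lambda\in 2\pi/3+2\pi\mathbb Z$: $\mu+i\nu=e^{i\pi/3}$, $x_0\in\frac1r\mathbb Z$, $y_0\in\frac12+\frac1r\mathbb Z$. Then for every $z\in\mathbb R$ the elements $l_1=(\tfrac1{\sqrt\nu},0,0)$, $l_2=(-\tfrac{\mu}{\sqrt\nu}+i\sqrt\nu,0,0)$, $l_3=(0,\tfrac1r,0)$, $l_4=(\tfrac{x_0}{\sqrt\nu}-\tfrac{\mu y_0}{\sqrt\nu}+i\sqrt\nu y_0,\,z,\,\lambda)$ generate a lattice in $\mathrm{Osc}_1$.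
   Context: $\mathrm{Osc}_1$ is the set $\mathbb C\times\mathbb R\times\mathbb R$ with multiplication $(\xi_1,z_1,t_1)(\xi_2,z_2,t_2)=(\xi_1+e^{it_1}\xi_2,\ z_1+z_2+\tfrac12\operatorname{Im}(\overline{\xi_1}e^{it_1}\xi_2),\ t_1+t_2)$. A lattice is a discrete subgroup with finite-volume (equivalently, since the group is solvable, compact) quotient. *)

theory Defs
  imports "HOL-Analysis.Analysis"
begin

type_synonym osc = "complex \<times> real \<times> real"

definition osc_mult :: "osc \<Rightarrow> osc \<Rightarrow> osc" where
  "osc_mult p q = (case p of (\<xi>1, z1, t1) \<Rightarrow> case q of (\<xi>2, z2, t2) \<Rightarrow>
     (\<xi>1 + cis t1 * \<xi>2, z1 + z2 + 1/2 * Im (cnj \<xi>1 * cis t1 * \<xi>2), t1 + t2))"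

definition osc_one :: osc where
  "osc_one = (0, 0, 0)"

definition osc_inv :: "osc \<Rightarrow> osc" where
  "osc_inv p = (case p of (\<xi>, z, t) \<Rightarrow> (- (cis (- t) * \<xi>), - z, - t))"

inductive_set osc_gen :: "osc set \<Rightarrow> osc set" for S where
  gen_base: "x \<in> S \<Longrightarrow> x \<in> osc_gen S"
| gen_one: "osc_one \<in> osc_gen S"
| gen_mult: "x \<in> osc_gen S \<Longrightarrow> y \<in> osc_gen S \<Longrightarrow> osc_mult x y \<in> osc_gen S"
| gen_inv: "x \<in> osc_gen S \<Longrightarrow> osc_inv x \<in> osc_gen S"

definition osc_subgroup :: "osc set \<Rightarrow> bool" where
  "osc_subgroup H \<longleftrightarrow> osc_one \<in> H \<and> (\<forall>x\<in>H. \<forall>y\<in>H. osc_mult x y \<in> H)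
     \<and> (\<forall>x\<in>H. osc_inv x \<in> H)"

definition osc_discrete :: "osc set \<Rightarrow> bool" where
  "osc_discrete H \<longleftrightarrow> (\<forall>h\<in>H. \<exists>e>0. ball h e \<inter> H = {h})"

text \<open>Compact quotient Osc_1/H (left cosets gH): some compact K with K H = Osc_1.\<close>
definition osc_cocompact :: "osc set \<Rightarrow> bool" where
  "osc_cocompact H \<longleftrightarrow> (\<exists>K. compact K \<and> (\<forall>g. \<exists>k\<in>K. \<exists>h\<in>H. g = osc_mult k h))"

definition osc_lattice :: "osc set \<Rightarrow> bool" where
  "osc_lattice H \<longleftrightarrow> osc_subgroup H \<and> osc_discrete H \<and> osc_cocompact H"

end

theory Submission
  imports Defs
begin


lemma om: "osc_mult (x1, z1, t1) (x2, z2, t2) =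
   (x1 + cis t1 * x2, z1 + z2 + 1/2 * Im (cnj x1 * cis t1 * x2), t1 + t2)"
  by (simp add: osc_mult_def)

lemma oi: "osc_inv (x, z, t) = (- (cis (- t) * x), - z, - t)"
  by (simp add: osc_inv_def)

lemma osc_assoc: "osc_mult (osc_mult p q) u = osc_mult p (osc_mult q u)"
proof -
  obtain x1 z1 t1 x2 z2 t2 x3 z3 t3 where P: "p = (x1,z1,t1)" "q = (x2,z2,t2)" "u = (x3,z3,t3)"
    by (metis prod.exhaust)
  have c: "cis t1 * cis t2 = cis (t1 + t2)" by (simp add: cis_mult)
  have d: "cnj (cis t1) * cis (t1 + t2) = cis t2"
    by (simp add: cis_cnj cis_mult)
  have e: "cnj (x1 + cis t1 * x2) * cis (t1 + t2) * x3 =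
        cnj x1 * cis t1 * (cis t2 * x3) + cnj x2 * cis t2 * x3"
  proof -
    have "cnj (x1 + cis t1 * x2) * cis (t1 + t2) * x3 = cnj x1 * (cis t1 * cis t2) * x3 + cnj x2 * (cnj (cis t1) * cis (t1 + t2)) * x3"
      by (simp add: c algebra_simps)
    then show ?thesis by (simp only: d) (simp add: algebra_simps)
  qed
  have "Im (cnj (x1 + cis t1 * x2) * cis (t1 + t2) * x3) =
        Im (cnj x1 * cis t1 * (cis t2 * x3)) + Im (cnj x2 * cis t2 * x3)"
    by (simp only: e Complex.plus_complex.sel)
  then show ?thesis using P by (simp add: om algebra_simps c[symmetric])
qed

lemma osc_rinv: "osc_mult (osc_mult x h) (osc_inv h) = x"
proof -
  obtain x1 z1 t1 x2 z2 t2 where P: "x = (x1,z1,t1)" "h = (x2,z2,t2)"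
    by (metis prod.exhaust)
  have c: "cis (t1 + t2) * cis (- t2) = cis t1" by (simp add: cis_mult)
  have c2: "cnj (cis t1) * cis t1 = 1" by (simp add: cis_cnj cis_mult)
  have e: "cnj (x1 + cis t1 * x2) * cis (t1 + t2) * (- (cis (- t2) * x2))
      = - (cnj x1 * cis t1 * x2) - (cnj (cis t1) * cis t1) * (cnj x2 * x2)"
  proof -
    have "cnj (x1 + cis t1 * x2) * cis (t1 + t2) * (- (cis (- t2) * x2))
       = - (cnj x1 * (cis (t1 + t2) * cis (- t2)) * x2) - (cnj (cis t1) * (cis (t1 + t2) * cis (- t2))) * (cnj x2 * x2)"
      by (simp add: algebra_simps)
    then show ?thesis by (simp only: c)
  qed
  have im: "Im (cnj x2 * x2) = 0"
    by (simp add: complex_mult_cnj [symmetric] mult.commute)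
  have x: "x1 + cis t1 * x2 + cis (t1 + t2) * - (cis (- t2) * x2) = x1"
  proof -
    have "cis (t1 + t2) * - (cis (- t2) * x2) = - ((cis (t1 + t2) * cis (- t2)) * x2)" by (simp add: algebra_simps)
    then show ?thesis by (simp only: c) simp
  qed
  show ?thesis unfolding P om oi
    apply (simp only: x e c2)
    apply (simp add: im field_simps)
    done
qed



definition lat :: "complex \<Rightarrow> complex \<Rightarrow> complex set" where
  "lat a b = {of_int m * a + of_int n * b | m n. True}"

lemma lat_add: "u \<in> lat a b \<Longrightarrow> v \<in> lat a b \<Longrightarrow> u + v \<in> lat a b"
  unfolding lat_def
proof clarify
  fix m n m' n' :: int
  show "\<exists>m'' n''. of_int m * a + of_int n * b + (of_int m' * a + of_int n' * b) = of_int m'' * a + of_int n'' * b \<and> True"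
    by (rule exI[of _ "m+m'"], rule exI[of _ "n+n'"]) (simp add: algebra_simps)
qed

lemma lat_neg: "u \<in> lat a b \<Longrightarrow> - u \<in> lat a b"
  unfolding lat_def
proof clarify
  fix m n :: int
  show "\<exists>m'' n''. - (of_int m * a + of_int n * b) = of_int m'' * a + of_int n'' * b \<and> True"
    by (rule exI[of _ "-m"], rule exI[of _ "-n"]) (simp add: algebra_simps)
qed

lemma lat_a: "of_int m * a + of_int n * b \<in> lat a b"
  unfolding lat_def by blast

lemma lat_zero: "0 \<in> lat a b"
  using lat_a[of 0 a 0 b] by simp

lemma lat_intmult: "u \<in> lat a b \<Longrightarrow> of_int k * u \<in> lat a b"
  unfolding lat_def
proof clarify
  fix m n :: int
  show "\<exists>m'' n''. of_int k * (of_int m * a + of_int n * b) = of_int m'' * a + of_int n'' * b \<and> True"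
    by (rule exI[of _ "k*m"], rule exI[of _ "k*n"]) (simp add: algebra_simps)
qed

lemma lat_rot: assumes "c * a \<in> lat a b" "c * b \<in> lat a b" "u \<in> lat a b"
  shows "c * u \<in> lat a b"
proof -
  obtain m n :: int where u: "u = of_int m * a + of_int n * b" using assms(3) unfolding lat_def by blast
  have "c * u = of_int m * (c * a) + of_int n * (c * b)" by (simp add: u algebra_simps)
  then show ?thesis using assms lat_add lat_intmult by metis
qed

lemma lat_rot_nat: assumes "cis l * a \<in> lat a b" "cis l * b \<in> lat a b"
  shows "u \<in> lat a b \<Longrightarrow> cis (real n * l) * u \<in> lat a b"
proof (induction n arbitrary: u)
  case 0 then show ?case by simp
next
  case (Suc n)
  have e: "cis (real (Suc n) * l) = cis l * cis (real n * l)"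
    by (simp add: cis_mult distrib_right)
  have "cis (real (Suc n) * l) * u = cis l * (cis (real n * l) * u)"
    by (simp only: e mult.assoc)
  moreover have "cis (real n * l) * u \<in> lat a b" using Suc.IH Suc.prems by blast
  ultimately show ?case using lat_rot[OF assms] by metis
qed

lemma lat_rot_int: assumes "cis l * a \<in> lat a b" "cis l * b \<in> lat a b"
   "cis (-l) * a \<in> lat a b" "cis (-l) * b \<in> lat a b" "u \<in> lat a b"
  shows "cis (of_int k * l) * u \<in> lat a b"
proof (cases "k \<ge> 0")
  case True
  then obtain n where "k = int n" by (metis nonneg_eq_int)
  then show ?thesis using lat_rot_nat[OF assms(1,2,5)] by simp
next
  case False
  define n where "n = nat (-k)"
  have k: "k = - int n" using False by (simp add: n_def)
  have "cis (of_int k * l) = cis (real n * (-l))" by (simp add: k)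
  then show ?thesis using lat_rot_nat[OF assms(3,4,5)] by simp
qed

lemma lat_im: assumes "u \<in> lat a b" "v \<in> lat a b"
  shows "\<exists>j::int. Im (cnj u * v) = of_int j * Im (cnj a * b)"
proof -
  obtain m n :: int where u: "u = of_int m * a + of_int n * b" using assms(1) unfolding lat_def by blast
  obtain m' n' :: int where v: "v = of_int m' * a + of_int n' * b" using assms(2) unfolding lat_def by blast
  have e: "cnj u * v = of_int (m*m') * (cnj a * a) + of_int (m*n') * (cnj a * b)
     + of_int (n*m') * cnj (cnj a * b) + of_int (n*n') * (cnj b * b)"
    by (simp add: u v algebra_simps)
  have ia: "Im (cnj a * a) = 0" "Im (cnj b * b) = 0"
    by (simp_all add: complex_mult_cnj [symmetric] mult.commute)
  have "Im (cnj u * v) = of_int (m*n' - n*m') * Im (cnj a * b)"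
    unfolding e by (simp add: ia algebra_simps del: complex_cnj_mult)
  then show ?thesis by blast
qed

lemma lat_norm:
  fixes s mu :: real
  assumes s: "s > 0" and u: "u \<in> lat (Complex (1/s) 0) (Complex (-mu/s) s)" and nz: "u \<noteq> 0"
  shows "norm u \<ge> min s (1/s)"
proof -
  obtain m n :: int where uu: "u = of_int m * Complex (1/s) 0 + of_int n * Complex (-mu/s) s"
    using u unfolding lat_def by blast
  have re: "Re u = of_int m / s - of_int n * mu / s" and im: "Im u = of_int n * s"
    by (simp_all add: uu)
  show ?thesis
  proof (cases "n = 0")
    case True
    then have "m \<noteq> 0" using nz uu by auto
    then have "\<bar>of_int m\<bar> \<ge> (1::real)" by linarith
    then have "\<bar>Re u\<bar> \<ge> 1/s" using True s by (simp add: re abs_div)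
      (metis divide_right_mono le_less_trans not_less order.refl abs_ge_zero s less_imp_le)
    then show ?thesis using abs_Re_le_cmod[of u] by linarith
  next
    case False
    then have "\<bar>of_int n\<bar> \<ge> (1::real)" by linarith
    then have "\<bar>Im u\<bar> \<ge> s" using s by (simp add: im abs_mult)
    then show ?thesis using abs_Im_le_cmod[of u] by linarith
  qed
qed

lemma lat_cover:
  fixes s mu :: real
  assumes s: "s > 0"
  shows "\<exists>m n::int. norm (\<zeta> - (of_int m * Complex (1/s) 0 + of_int n * Complex (-mu/s) s))
           \<le> norm (Complex (1/s) 0) + norm (Complex (-mu/s) s)"
proof -
  define a where "a = Complex (1/s) 0"
  define b where "b = Complex (-mu/s) s"
  define v where "v = Im \<zeta> / s"
  define u where "u = Re \<zeta> * s + mu * v"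
  have z: "\<zeta> = of_real u * a + of_real v * b"
    using s by (simp add: complex_eq_iff a_def b_def u_def v_def field_simps)
  define m where "m = \<lfloor>u\<rfloor>"
  define n where "n = \<lfloor>v\<rfloor>"
  have "\<zeta> - (of_int m * a + of_int n * b) = of_real (u - of_int m) * a + of_real (v - of_int n) * b"
    by (simp add: z algebra_simps)
  also have "norm \<dots> \<le> norm (of_real (u - of_int m) * a) + norm (of_real (v - of_int n) * b)"
    by (rule norm_triangle_ineq)
  also have "\<dots> \<le> norm a + norm b"
  proof -
    have "\<bar>u - of_int m\<bar> \<le> 1" "\<bar>v - of_int n\<bar> \<le> 1"
      unfolding m_def n_def by linarith+
    then have "norm (of_real (u - of_int m) * a) \<le> norm a" "norm (of_real (v - of_int n) * b) \<le> norm b"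
      by (simp_all only: norm_mult norm_of_real mult_left_le_one_le norm_ge_zero)
    then show ?thesis by linarith
  qed
  finally show ?thesis unfolding a_def b_def by blast
qed



lemma gen_pow_nat:
  assumes "(v, w, 0) \<in> osc_gen S"
  shows "(of_nat n * v, of_nat n * w, 0) \<in> osc_gen S"
proof (induction n)
  case 0 then show ?case using gen_one[of S] by (simp add: osc_one_def)
next
  case (Suc n)
  have "osc_mult (v, w, 0) (of_nat n * v, of_nat n * w, 0) = (of_nat (Suc n) * v, of_nat (Suc n) * w, 0)"
  proof -
    have "Im (cnj v * (of_nat n * v)) = 0"
      by (simp add: complex_mult_cnj [symmetric] mult.commute mult.left_commute)
    then show ?thesis by (simp add: om algebra_simps)
  qed
  then show ?case using gen_mult[OF assms Suc] by simp
qed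

lemma gen_pow:
  assumes "(v, w, 0) \<in> osc_gen S"
  shows "(of_int k * v, of_int k * w, 0) \<in> osc_gen S"
proof (cases "k \<ge> 0")
  case True
  then obtain n where "k = int n" by (metis nonneg_eq_int)
  then show ?thesis using gen_pow_nat[OF assms, of n] by simp
next
  case False
  define n where "n = nat (-k)"
  have k: "k = - int n" using False by (simp add: n_def)
  have "osc_inv (of_nat n * v, of_nat n * w, 0) = (of_int k * v, of_int k * w, 0)"
    by (simp add: oi k)
  then show ?thesis using gen_inv[OF gen_pow_nat[OF assms, of n]] by simp
qed

lemma gen_tpow:
  assumes "(v, w, t) \<in> osc_gen S"
  shows "\<exists>h\<in>osc_gen S. snd (snd h) = of_int k * t"
proof -
  have nat: "\<exists>h\<in>osc_gen S. snd (snd h) = of_nat n * t" for n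
  proof (induction n)
    case 0 then show ?case using gen_one[of S] by (metis osc_one_def snd_conv mult_zero_left of_nat_0)
  next
    case (Suc n)
    then obtain h where h: "h \<in> osc_gen S" "snd (snd h) = of_nat n * t" by blast
    obtain h1 h2 h3 where hh: "h = (h1, h2, h3)" by (metis prod.exhaust)
    have "osc_mult h (v, w, t) \<in> osc_gen S" using gen_mult[OF h(1) assms] .
    moreover have "snd (snd (osc_mult h (v, w, t))) = of_nat (Suc n) * t"
      using h(2) by (simp add: hh om algebra_simps)
    ultimately show ?case by blast
  qed
  show ?thesis
  proof (cases "k \<ge> 0")
    case True
    then obtain n where "k = int n" by (metis nonneg_eq_int)
    then show ?thesis using nat[of n] by simp
  next
    case False
    define n where "n = nat (-k)"
    have k: "k = - int n" using False by (simp add: n_def)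
    obtain h where h: "h \<in> osc_gen S" "snd (snd h) = of_nat n * t" using nat by blast
    obtain h1 h2 h3 where hh: "h = (h1, h2, h3)" by (metis prod.exhaust)
    have "osc_inv h \<in> osc_gen S" using gen_inv[OF h(1)] .
    moreover have "snd (snd (osc_inv h)) = of_int k * t" using h(2) by (simp add: hh oi k)
    ultimately show ?thesis by blast
  qed
qed



lemma core:
  fixes r :: nat and lam mu nu z :: real and xi4 a b :: complex
  assumes nu: "nu > 0" and r: "r > 0" and lam0: "lam \<noteq> 0"
    and a_def: "a = Complex (1 / sqrt nu) 0" and b_def: "b = Complex (- mu / sqrt nu) (sqrt nu)"
    and rot: "cis lam * a \<in> lat a b" "cis lam * b \<in> lat a b"
             "cis (-lam) * a \<in> lat a b" "cis (-lam) * b \<in> lat a b"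
    and x4: "xi4 * of_real (2 * real r) \<in> lat a b"
  shows "osc_lattice (osc_gen {(a, 0, 0), (b, 0, 0), (0, 1 / real r, 0), (xi4, z, lam)})"
proof -
  define S where "S = {(a, 0, 0), (b, 0, 0), (0, 1 / real r, 0), (xi4, z, lam)}"
  define G where "G = osc_gen S"
  define N :: complex where "N = of_real (2 * real r)"
  define c :: real where "c = 1 / (2 * (2 * real r)^2)"
  define s where "s = sqrt nu"
  have s: "s > 0" using nu by (simp add: s_def)
  have Npos: "2 * real r > 0" using r by simp
  have ab: "Im (cnj a * b) = 1" using s by (simp add: a_def b_def s_def[symmetric])
  define D where "D = {(\<xi>, w, t). \<exists>k::int. t = of_int k * lam \<and> \<xi> * N \<in> lat a b
                        \<and> (\<exists>j::int. w = of_int k * z + of_int j * c)}"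
  have imN: "\<exists>j::int. 1/2 * Im (cnj u * v) = of_int j * c" if h1: "u * N \<in> lat a b" and h2: "v * N \<in> lat a b" for u v
  proof -
    obtain j where j: "Im (cnj (u * N) * (v * N)) = of_int j * Im (cnj a * b)"
      using lat_im[OF h1 h2] by blast
    have "cnj (u * N) * (v * N) = of_real ((2 * real r)^2) * (cnj u * v)"
      by (simp add: N_def power2_eq_square algebra_simps)
    moreover have imr: "Im (of_real x * w) = x * Im w" for x w by simp
    ultimately have "Im (cnj (u * N) * (v * N)) = (2 * real r)^2 * Im (cnj u * v)"
      by (simp only: imr)
    then have e: "(2 * real r)^2 * Im (cnj u * v) = of_int j"
      using j ab by (metis mult.right_neutral)
    have "1/2 * Im (cnj u * v) = of_int j * c"
      unfolding c_def e[symmetric] using Npos by (simp add: field_simps)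
    then show ?thesis by blast
  qed
  have Dintro: "t = of_int k * lam \<Longrightarrow> \<xi> * N \<in> lat a b \<Longrightarrow> w = of_int k * z + of_int j * c \<Longrightarrow> (\<xi>, w, t) \<in> D"
    for t k \<xi> w j unfolding D_def by auto
  have GD: "G \<subseteq> D"
  proof
    fix x assume "x \<in> G"
    then show "x \<in> D" unfolding G_def
    proof (induction rule: osc_gen.induct)
      case (gen_base x)
      have aN: "a * N \<in> lat a b" using lat_a[of "int (2*r)" a 0 b] by (simp add: N_def mult.commute)
      have bN: "b * N \<in> lat a b" using lat_a[of 0 a "int (2*r)" b] by (simp add: N_def mult.commute)
      have c8: "1 / real r = of_int (int (8 * r)) * c" using r by (simp add: c_def power2_eq_square field_simps)
      have "(0, 1 / real r, 0) \<in> D"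
        by (rule Dintro[where k=0 and j="int (8*r)"]) (use lat_zero[of a b] c8 in auto)
      moreover have "(a, 0, 0) \<in> D" unfolding D_def using aN by (auto intro!: exI[of _ 0])
      moreover have "(b, 0, 0) \<in> D" unfolding D_def using bN by (auto intro!: exI[of _ 0])
      moreover have "(xi4, z, lam) \<in> D"
        by (rule Dintro[where k=1 and j=0]) (use x4 in \<open>auto simp: N_def\<close>)
      ultimately show ?case using gen_base unfolding S_def by blast
    next
      case gen_one
      then show ?case unfolding D_def osc_one_def using lat_zero[of a b]
        by (auto intro!: exI[of _ 0])
    next
      case (gen_mult x y)
      obtain x1 w1 t1 where xx: "x = (x1, w1, t1)" by (metis prod.exhaust)
      obtain x2 w2 t2 where yy: "y = (x2, w2, t2)" by (metis prod.exhaust)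
      obtain k1 j1 where 1: "t1 = of_int k1 * lam" "x1 * N \<in> lat a b" "w1 = of_int k1 * z + of_int j1 * c"
        using gen_mult.IH(1) unfolding xx D_def by auto
      obtain k2 j2 where 2: "t2 = of_int k2 * lam" "x2 * N \<in> lat a b" "w2 = of_int k2 * z + of_int j2 * c"
        using gen_mult.IH(2) unfolding yy D_def by auto
      have r2: "(cis t1 * x2) * N \<in> lat a b"
        using lat_rot_int[OF rot 2(2), of k1] 1(1) by (simp add: mult.assoc)
      obtain J where J: "1/2 * Im (cnj x1 * (cis t1 * x2)) = of_int J * c"
        using imN[OF 1(2) r2] by blast
      have xi: "(x1 + cis t1 * x2) * N \<in> lat a b"
        using lat_add[OF 1(2) r2] by (simp add: algebra_simps)
      have "osc_mult x y = (x1 + cis t1 * x2, w1 + w2 + 1/2 * Im (cnj x1 * (cis t1 * x2)), t1 + t2)"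
        by (simp add: xx yy om mult.assoc)
      also have "\<dots> \<in> D"
      proof (rule Dintro[where k="k1+k2" and j="j1+j2+J"])
        show "t1 + t2 = real_of_int (k1 + k2) * lam" using 1(1) 2(1) by (simp add: algebra_simps)
        show "(x1 + cis t1 * x2) * N \<in> lat a b" by (rule xi)
        show "w1 + w2 + 1 / 2 * Im (cnj x1 * (cis t1 * x2)) = real_of_int (k1 + k2) * z + real_of_int (j1 + j2 + J) * c"
          by (simp only: J 1(3) 2(3) of_int_add) (simp add: algebra_simps)
      qed
      finally show ?case .
    next
      case (gen_inv x)
      obtain x1 w1 t1 where xx: "x = (x1, w1, t1)" by (metis prod.exhaust)
      obtain k1 j1 where 1: "t1 = of_int k1 * lam" "x1 * N \<in> lat a b" "w1 = of_int k1 * z + of_int j1 * c"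
        using gen_inv.IH unfolding xx D_def by auto
      have r2: "(cis (- t1) * x1) * N \<in> lat a b"
        using lat_rot_int[OF rot 1(2), of "-k1"] 1(1) by (simp add: mult.assoc)
      have "(- (cis (- t1) * x1)) * N \<in> lat a b" using lat_neg[OF r2] by simp
      then show ?case unfolding xx oi
        by (rule Dintro[where k="-k1" and j="-j1", rotated]) (simp_all add: 1)
    qed
  qed
  have sub: "osc_subgroup G" unfolding osc_subgroup_def G_def
    by (auto intro: osc_gen.intros)
  define ms where "ms = min s (1/s) / (2 * real r)"
  have ms: "ms > 0" using s Npos by (simp add: ms_def)
  have cpos: "c > 0" using Npos by (simp add: c_def)
  define \<delta> where "\<delta> = min \<bar>lam\<bar> (min c ms)"
  have \<delta>: "\<delta> > 0" using lam0 ms cpos by (simp add: \<delta>_def)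
  have close: "p = q" if p: "p \<in> D" and q: "q \<in> D" and d: "dist p q < \<delta>" for p q
  proof -
    obtain x1 w1 t1 where pp: "p = (x1, w1, t1)" by (metis prod.exhaust)
    obtain x2 w2 t2 where qq: "q = (x2, w2, t2)" by (metis prod.exhaust)
    obtain k1 j1 where 1: "t1 = of_int k1 * lam" "x1 * N \<in> lat a b" "w1 = of_int k1 * z + of_int j1 * c"
      using p unfolding pp D_def by auto
    obtain k2 j2 where 2: "t2 = of_int k2 * lam" "x2 * N \<in> lat a b" "w2 = of_int k2 * z + of_int j2 * c"
      using q unfolding qq D_def by auto
    have dx: "dist x1 x2 < \<delta>" using dist_fst_le[of p q] d by (simp add: pp qq)
    have dsnd: "dist (w1, t1) (w2, t2) < \<delta>" using dist_snd_le[of p q] d by (simp add: pp qq)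
    have dw: "dist w1 w2 < \<delta>" using dist_fst_le[of "(w1, t1)" "(w2, t2)"] dsnd by simp
    have dt: "dist t1 t2 < \<delta>" using dist_snd_le[of "(w1, t1)" "(w2, t2)"] dsnd by simp
    have k: "k1 = k2"
    proof (rule ccontr)
      assume "k1 \<noteq> k2"
      then have "\<bar>real_of_int (k1 - k2)\<bar> \<ge> 1" by linarith
      then have "\<bar>real_of_int (k1 - k2)\<bar> * \<bar>lam\<bar> \<ge> \<bar>lam\<bar>"
        by (simp add: mult_le_cancel_right1)
      moreover have "dist t1 t2 = \<bar>real_of_int (k1 - k2)\<bar> * \<bar>lam\<bar>"
        by (simp add: 1 2 dist_real_def abs_mult[symmetric] algebra_simps)
      ultimately show False using dt by (simp add: \<delta>_def)
    qed
    have j: "j1 = j2"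
    proof (rule ccontr)
      assume "j1 \<noteq> j2"
      then have "\<bar>real_of_int (j1 - j2)\<bar> \<ge> 1" by linarith
      then have "\<bar>real_of_int (j1 - j2)\<bar> * c \<ge> c"
        using cpos by (simp add: mult_le_cancel_right1)
      moreover have "dist w1 w2 = \<bar>real_of_int (j1 - j2)\<bar> * c"
      proof -
        have "w1 - w2 = real_of_int (j1 - j2) * c" by (simp add: 1 2 k algebra_simps)
        then show ?thesis using cpos by (simp add: dist_real_def abs_mult)
      qed
      ultimately show False using dw by (simp add: \<delta>_def)
    qed
    have x: "x1 = x2"
    proof (rule ccontr)
      assume ne: "x1 \<noteq> x2"
      have inl: "(x1 - x2) * N \<in> lat a b" using lat_add[OF 1(2) lat_neg[OF 2(2)]]
        by (simp add: algebra_simps)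
      have nz: "(x1 - x2) * N \<noteq> 0" using ne Npos by (simp add: N_def)
      have "norm ((x1 - x2) * N) \<ge> min s (1/s)"
        using lat_norm[OF s, of "(x1 - x2) * N" mu] inl nz by (simp add: a_def b_def s_def)
      then have "norm (x1 - x2) * (2 * real r) \<ge> min s (1/s)"
        by (simp add: norm_mult N_def)
      then have "norm (x1 - x2) \<ge> ms" using Npos by (simp add: ms_def field_simps)
      then show False using dx by (simp add: \<delta>_def dist_norm)
    qed
    show ?thesis using k j x 1 2 by (simp add: pp qq)
  qed
  have disc: "osc_discrete G" unfolding osc_discrete_def
  proof
    fix h assume h: "h \<in> G"
    have "ball h \<delta> \<inter> G = {h}"
    proof safe
      fix x assume "x \<in> ball h \<delta>" "x \<in> G"
      then show "x = h" using close[of h x] h GD by (auto simp: dist_commute)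
    qed (use h \<delta> in auto)
    then show "\<exists>e>0. ball h e \<inter> G = {h}" using \<delta> by blast
  qed
  have cocpt: "osc_cocompact G" unfolding osc_cocompact_def
  proof (intro exI[of _ "cball (0::complex) (norm a + norm b) \<times> ({0..1/real r} \<times> {0..\<bar>lam\<bar>})"] conjI allI)
    show "compact (cball (0::complex) (norm a + norm b) \<times> ({0..1/real r} \<times> {0..\<bar>lam\<bar>}))"
      by (intro compact_Times compact_Icc compact_cball[of "0::complex"])
    fix g :: osc
    obtain \<xi> w t where gg: "g = (\<xi>, w, t)" by (metis prod.exhaust)
    obtain k :: int where kk: "0 \<le> t + of_int k * lam" "t + of_int k * lam \<le> \<bar>lam\<bar>"
    proof (cases "lam > 0")
      case True
      define k where "k = - \<lfloor>t / lam\<rfloor>"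
      have f1: "t / lam - 1 < of_int \<lfloor>t / lam\<rfloor>" and f2: "of_int \<lfloor>t / lam\<rfloor> \<le> t / lam" by linarith+
      have "t - lam < of_int \<lfloor>t / lam\<rfloor> * lam" using f1 True by (simp add: field_simps)
      moreover have "of_int \<lfloor>t / lam\<rfloor> * lam \<le> t" using f2 pos_le_divide_eq[OF True] by blast
      ultimately have "t - lam < of_int \<lfloor>t / lam\<rfloor> * lam" "of_int \<lfloor>t / lam\<rfloor> * lam \<le> t" by auto
      then show ?thesis using that[of k] True by (simp add: k_def)
    next
      case False
      then have ln: "lam < 0" using lam0 by simp
      define k where "k = \<lfloor>t / (- lam)\<rfloor>"
      have f1: "t / (-lam) - 1 < of_int k" and f2: "of_int k \<le> t / (-lam)" unfolding k_def by linarith+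
      have nl: "-lam > 0" using ln by simp
      have "t + lam < of_int k * (- lam)" using f1 ln by (simp add: field_simps)
      moreover have "of_int k * (-lam) \<le> t" using f2 pos_le_divide_eq[OF nl] by blast
      ultimately have "t + lam < of_int k * (- lam)" "of_int k * (-lam) \<le> t" by auto
      then show ?thesis using that[of k] ln by (simp add: algebra_simps)
    qed
    have l4: "(xi4, z, lam) \<in> G" unfolding G_def S_def by (rule gen_base) simp
    obtain h1 where h1: "h1 \<in> G" "snd (snd h1) = of_int k * lam"
      using gen_tpow[OF l4[unfolded G_def]] G_def by blast
    define g1 where "g1 = osc_mult g h1"
    obtain \<xi>1 w1 t1 where g1: "g1 = (\<xi>1, w1, t1)" by (metis prod.exhaust)
    have t1: "t1 = t + of_int k * lam"
    proof -
      obtain p1 p2 p3 where "h1 = (p1, p2, p3)" by (metis prod.exhaust)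
      then show ?thesis using g1 h1(2) by (simp add: g1_def gg om)
    qed
    define \<zeta> where "\<zeta> = - (cis (- t1) * \<xi>1)"
    obtain m n :: int where mn: "norm (\<zeta> - (of_int m * a + of_int n * b)) \<le> norm a + norm b"
      using lat_cover[OF s, of \<zeta> mu] by (auto simp: a_def b_def s_def)
    have ga: "(a, 0, 0) \<in> G" unfolding G_def S_def by (rule gen_base) simp
    have gb: "(b, 0, 0) \<in> G" unfolding G_def S_def by (rule gen_base) simp
    have gc: "(0, 1 / real r, 0) \<in> G" unfolding G_def S_def by (rule gen_base) simp
    define h2 where "h2 = osc_mult (of_int m * a, 0, 0) (of_int n * b, 0, 0)"
    have h2G: "h2 \<in> G" unfolding h2_def G_def
      using gen_pow[OF ga[unfolded G_def], of m] gen_pow[OF gb[unfolded G_def], of n]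
      by (intro gen_mult) simp_all
    define \<eta> where "\<eta> = of_int m * a + of_int n * b"
    define w' where "w' = fst (snd h2)"
    have h2e: "h2 = (\<eta>, w', 0)" by (simp add: h2_def om \<eta>_def w'_def)
    define g2 where "g2 = osc_mult g1 h2"
    define w2 where "w2 = fst (snd g2)"
    have g2: "g2 = (\<xi>1 + cis t1 * \<eta>, w2, t1)" by (simp add: g2_def g1 h2e om w2_def)
    have nrm: "norm (\<xi>1 + cis t1 * \<eta>) \<le> norm a + norm b"
    proof -
      have "\<xi>1 + cis t1 * \<eta> = cis t1 * (\<eta> - \<zeta>)"
        by (simp add: \<zeta>_def algebra_simps cis_mult)
      then have "norm (\<xi>1 + cis t1 * \<eta>) = norm (\<zeta> - \<eta>)"
        by (simp add: norm_mult norm_minus_commute)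
      then show ?thesis using mn by (simp add: \<eta>_def)
    qed
    define p :: int where "p = - \<lfloor>w2 * real r\<rfloor>"
    define h3 where "h3 = (of_int p * (0::complex), of_int p * (1 / real r), 0::real)"
    have h3G: "h3 \<in> G" unfolding h3_def G_def by (rule gen_pow) (use gc G_def in simp)
    define g3 where "g3 = osc_mult g2 h3"
    have g3: "g3 = (\<xi>1 + cis t1 * \<eta>, w2 + of_int p / real r, t1)"
      by (simp add: g3_def g2 h3_def om)
    have wr: "0 \<le> w2 + of_int p / real r" "w2 + of_int p / real r \<le> 1 / real r"
    proof -
      have f: "w2 * real r - 1 \<le> of_int \<lfloor>w2 * real r\<rfloor>" "of_int \<lfloor>w2 * real r\<rfloor> \<le> w2 * real r" by linarith+
      have eq: "w2 + of_int p / real r = (w2 * real r - of_int \<lfloor>w2 * real r\<rfloor>) / real r"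
        using r by (simp add: p_def field_simps)
      show "0 \<le> w2 + of_int p / real r" unfolding eq using f by simp
      show "w2 + of_int p / real r \<le> 1 / real r" unfolding eq using f r
        by (intro divide_right_mono) (linarith, simp)
    qed
    have g3K: "g3 \<in> cball (0::complex) (norm a + norm b) \<times> ({0..1/real r} \<times> {0..\<bar>lam\<bar>})"
      using nrm wr kk t1 by (simp add: g3)
    define h where "h = osc_mult (osc_inv h3) (osc_mult (osc_inv h2) (osc_inv h1))"
    have hG: "h \<in> G" unfolding h_def G_def using h1(1) h2G h3G unfolding G_def
      by (intro gen_mult gen_inv)
    have "osc_mult g3 h = g"
    proof -
      have "osc_mult g3 h = osc_mult (osc_mult (osc_mult g3 (osc_inv h3)) (osc_inv h2)) (osc_inv h1)"
        by (simp add: h_def osc_assoc)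
      also have "\<dots> = g" by (simp add: g3_def g2_def g1_def osc_rinv)
      finally show ?thesis .
    qed
    then show "\<exists>k\<in>cball (0::complex) (norm a + norm b) \<times> ({0..1/real r} \<times> {0..\<bar>lam\<bar>}). \<exists>h\<in>G. g = osc_mult k h"
      using g3K hG by metis
  qed
  show ?thesis using sub disc cocpt unfolding osc_lattice_def G_def S_def by blast
qed



lemma cis_m2pi [simp]: "cis (- (2 * pi * real_of_int k)) = 1"
proof -
  have "cis (2 * pi * real_of_int (-k)) = 1" by (rule cis_multiple_2pi) simp
  then show ?thesis by simp
qed

lemma lat_memI: "v = of_int m * a + of_int n * b \<Longrightarrow> v \<in> lat a b"
  using lat_a by blast

lemma main_gen:
  fixes r :: nat and lam mu nu x0 y0 z :: real
  assumes nu: "nu > 0" and r: "r > 0" and lam0: "lam \<noteq> 0"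
    and rot: "cis lam * Complex (1 / sqrt nu) 0 \<in> lat (Complex (1 / sqrt nu) 0) (Complex (- mu / sqrt nu) (sqrt nu))"
             "cis lam * Complex (- mu / sqrt nu) (sqrt nu) \<in> lat (Complex (1 / sqrt nu) 0) (Complex (- mu / sqrt nu) (sqrt nu))"
             "cis (-lam) * Complex (1 / sqrt nu) 0 \<in> lat (Complex (1 / sqrt nu) 0) (Complex (- mu / sqrt nu) (sqrt nu))"
             "cis (-lam) * Complex (- mu / sqrt nu) (sqrt nu) \<in> lat (Complex (1 / sqrt nu) 0) (Complex (- mu / sqrt nu) (sqrt nu))"
    and X: "\<exists>X::int. 2 * real r * x0 = of_int X" and Y: "\<exists>Y::int. 2 * real r * y0 = of_int Y"
  shows "osc_lattice (osc_gen
           { (Complex (1 / sqrt nu) 0, 0, 0),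
             (Complex (- mu / sqrt nu) (sqrt nu), 0, 0),
             (0, 1 / real r, 0),
             (Complex (x0 / sqrt nu - mu * y0 / sqrt nu) (sqrt nu * y0), z, lam) })"
proof (rule core[OF nu r lam0 refl refl rot])
  obtain X Y :: int where XY: "2 * real r * x0 = of_int X" "2 * real r * y0 = of_int Y" using X Y by blast
  have "Complex (x0 / sqrt nu - mu * y0 / sqrt nu) (sqrt nu * y0) * complex_of_real (2 * real r)
     = of_real (2 * real r * x0) * Complex (1 / sqrt nu) 0 + of_real (2 * real r * y0) * Complex (- mu / sqrt nu) (sqrt nu)"
    by (simp add: complex_eq_iff field_simps)
  also have "\<dots> = of_int X * Complex (1 / sqrt nu) 0 + of_int Y * Complex (- mu / sqrt nu) (sqrt nu)"
    by (simp only: XY of_real_of_int_eq)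
  finally show "Complex (x0 / sqrt nu - mu * y0 / sqrt nu) (sqrt nu * y0) * complex_of_real (2 * real r)
     \<in> lat (Complex (1 / sqrt nu) 0) (Complex (- mu / sqrt nu) (sqrt nu))"
    by (rule lat_memI)
qed

theorem lemma4p13:
  fixes r :: nat and lam mu nu x0 y0 z :: real
  assumes r_pos: "r > 0"
    and lam_cases: "(\<exists>n::nat. n > 0 \<and> lam = pi * real n)
                  \<or> (\<exists>k::int. lam = pi/2 + 2*pi*real_of_int k)
                  \<or> (\<exists>k::int. lam = pi/3 + 2*pi*real_of_int k)
                  \<or> (\<exists>k::int. lam = 2*pi/3 + 2*pi*real_of_int k)"
    and case_i: "(\<exists>n::nat. n > 0 \<and> lam = pi * real n) \<longrightarrow>
        nu > 0 \<and> (\<exists>m::int. x0 = real_of_int m / real r) \<and> (\<exists>m::int. y0 = real_of_int m / real r)"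
    and case_ii: "(\<exists>k::int. lam = pi/2 + 2*pi*real_of_int k) \<longrightarrow>
        Complex mu nu = \<i> \<and> (\<exists>m::int. x0 = real_of_int m / real r) \<and> (\<exists>m::int. y0 = real_of_int m / real r)"
    and case_iii: "(\<exists>k::int. lam = pi/3 + 2*pi*real_of_int k) \<longrightarrow>
        Complex mu nu = cis (pi/3) \<and> (\<exists>m::int. x0 = 1/2 + real_of_int m / real r)
          \<and> (\<exists>m::int. y0 = real_of_int m / real r)"
    and case_iv: "(\<exists>k::int. lam = 2*pi/3 + 2*pi*real_of_int k) \<longrightarrow>
        Complex mu nu = cis (pi/3) \<and> (\<exists>m::int. x0 = real_of_int m / real r)
          \<and> (\<exists>m::int. y0 = 1/2 + real_of_int m / real r)"
  shows "osc_lattice (osc_gen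
           { (Complex (1 / sqrt nu) 0, 0, 0),
             (Complex (- mu / sqrt nu) (sqrt nu), 0, 0),
             (0, 1 / real r, 0),
             (Complex (x0 / sqrt nu - mu * y0 / sqrt nu) (sqrt nu * y0), z, lam) })"
proof -
  define s where "s = sqrt nu"
  define a where "a = Complex (1 / sqrt nu) 0"
  define b where "b = Complex (- mu / sqrt nu) (sqrt nu)"
  have XY: "\<exists>X::int. 2 * real r * x0 = of_int X"  "\<exists>Y::int. 2 * real r * y0 = of_int Y"
    if hx: "\<exists>m::int. x0 = real_of_int m / real r" and hy: "\<exists>m::int. y0 = real_of_int m / real r" for x0 y0
  proof -
    obtain m1 m2 :: int where "x0 = real_of_int m1 / real r" "y0 = real_of_int m2 / real r" using hx hy by blast
    then have "2 * real r * x0 = of_int (2*m1)" "2 * real r * y0 = of_int (2*m2)" using r_pos by simp_all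
    then show "\<exists>X::int. 2 * real r * x0 = of_int X"  "\<exists>Y::int. 2 * real r * y0 = of_int Y"
      by blast+
  qed
  have half: "\<exists>X::int. 2 * real r * x0 = of_int X"
    if hx: "\<exists>m::int. x0 = 1/2 + real_of_int m / real r" for x0
  proof -
    obtain m :: int where "x0 = 1/2 + real_of_int m / real r" using hx by blast
    then have "2 * real r * x0 = of_int (int r + 2*m)" using r_pos by (simp add: field_simps)
    then show ?thesis by blast
  qed
  have neg1: "(-1::complex) ^ n * v \<in> lat a b" if "v \<in> lat a b" for n v
    using that lat_neg[OF that] by (cases "even n") simp_all
  from lam_cases show ?thesis
  proof (elim disjE)
    assume h: "\<exists>n::nat. n > 0 \<and> lam = pi * real n"
    then obtain n :: nat where n: "n > 0" "lam = pi * real n" by blast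
    have H: "nu > 0" "\<exists>m::int. x0 = real_of_int m / real r" "\<exists>m::int. y0 = real_of_int m / real r"
      using case_i h by auto
    have l0: "lam \<noteq> 0" using n by simp
    have c1: "cis lam = (-1) ^ n"
    proof -
      have "cis (real n * pi) = cis pi ^ n" by (rule Complex.DeMoivre[symmetric])
      also have "\<dots> = (-1) ^ n" by simp
      finally show ?thesis unfolding n by (simp only: mult.commute)
    qed
    have c2: "cis (-lam) = (-1) ^ n"
    proof -
      have "cis (-lam) = cis (- pi) ^ n" by (simp add: n Complex.DeMoivre mult.commute)
      moreover have "cis (- pi) = -1" by (simp add: complex_eq_iff)
      ultimately show ?thesis by simp
    qed
    have la: "a \<in> lat a b" using lat_memI[of a 1 a 0 b] by simp
    have lb: "b \<in> lat a b" using lat_memI[of b 0 a 1 b] by simp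
    show ?thesis
      by (rule main_gen[OF H(1) r_pos l0 _ _ _ _ XY[OF H(2,3)]])
        (simp_all only: c1 c2 neg1 la lb flip: a_def b_def)
  next
    assume h: "\<exists>k::int. lam = pi/2 + 2*pi*real_of_int k"
    then obtain k :: int where k: "lam = pi/2 + 2*pi*real_of_int k" by blast
    have H: "Complex mu nu = \<i>" "\<exists>m::int. x0 = real_of_int m / real r" "\<exists>m::int. y0 = real_of_int m / real r"
      using case_ii h by auto
    have mn: "mu = 0" "nu = 1" using H(1) by (simp_all add: complex_eq_iff)
    have l0: "lam \<noteq> 0"
    proof
      assume "lam = 0"
      then have "pi * (1/2 + 2 * real_of_int k) = 0" using k by (simp add: algebra_simps)
      then have "1/2 + 2 * real_of_int k = 0" by simp
      then have "real_of_int (4 * k + 1) = 0" by simp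
      then show False by presburger
    qed
    have c1: "cis lam = \<i>"
    proof -
      have "cis lam = cis (pi/2) * cis (2 * pi * real_of_int k)" by (simp only: k cis_mult)
      then show ?thesis by simp
    qed
    have c2: "cis (-lam) = - \<i>"
    proof -
      have "-lam = -(pi/2) + 2 * pi * real_of_int (-k)" by (simp add: k)
      then have "cis (-lam) = cis (-(pi/2)) * cis (2 * pi * real_of_int (-k))" by (simp only: cis_mult)
      then show ?thesis by simp
    qed
    have ab: "a = 1" "b = \<i>" by (simp_all add: a_def b_def mn complex_eq_iff)
    show ?thesis
    proof (rule main_gen[OF _ r_pos l0 _ _ _ _ XY[OF H(2,3)]], simp_all only: flip: a_def b_def)
      show "nu > 0" using mn by simp
      show "cis lam * a \<in> lat a b" by (rule lat_memI[of _ 0 _ 1]) (simp add: c1 ab)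
      show "cis lam * b \<in> lat a b" by (rule lat_memI[of _ "-1" _ 0]) (simp add: c1 ab)
      show "cis (-lam) * a \<in> lat a b" by (rule lat_memI[of _ 0 _ "-1"]) (simp add: c2 ab)
      show "cis (-lam) * b \<in> lat a b" by (rule lat_memI[of _ 1 _ 0]) (simp add: c2 ab)
    qed
  next
    assume h: "\<exists>k::int. lam = pi/3 + 2*pi*real_of_int k"
    then obtain k :: int where k: "lam = pi/3 + 2*pi*real_of_int k" by blast
    have H: "Complex mu nu = cis (pi/3)" "\<exists>m::int. x0 = 1/2 + real_of_int m / real r" "\<exists>m::int. y0 = real_of_int m / real r"
      using case_iii h by auto
    have mn: "mu = 1/2" "nu = sqrt 3 / 2" using H(1) by (simp_all add: complex_eq_iff cos_60 sin_60)
    have nu: "nu > 0" unfolding mn(2) by simp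
    have s: "s > 0" "s * s = sqrt 3 / 2" using nu by (simp_all add: s_def mn)
    have r3: "sqrt 3 = 2 * s * s" using s(2) by simp
    have s4: "s * (s * (s * (s * 4))) = 3"
    proof -
      have "s * (s * (s * (s * 4))) = 4 * (s * s) * (s * s)" by (simp add: algebra_simps)
      also have "\<dots> = 4 * (sqrt 3 / 2) * (sqrt 3 / 2)" by (simp only: s(2))
      also have "\<dots> = 3" by simp
      finally show ?thesis .
    qed
    have l0: "lam \<noteq> 0"
    proof
      assume "lam = 0"
      then have "pi * (1/3 + 2 * real_of_int k) = 0" using k by (simp add: algebra_simps)
      then have "1/3 + 2 * real_of_int k = 0" by simp
      then have "real_of_int (6 * k + 1) = 0" by simp
      then show False by presburger
    qed
    have c1: "cis lam = Complex (1/2) (sqrt 3 / 2)"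
    proof -
      have "cis lam = cis (pi/3) * cis (2 * pi * real_of_int k)" by (simp only: k cis_mult)
      then show ?thesis by (simp add: complex_eq_iff cos_60 sin_60)
    qed
    have c2: "cis (-lam) = Complex (1/2) (- sqrt 3 / 2)"
    proof -
      have "-lam = -(pi/3) + 2 * pi * real_of_int (-k)" by (simp add: k)
      then have "cis (-lam) = cis (-(pi/3)) * cis (2 * pi * real_of_int (-k))" by (simp only: cis_mult)
      then show ?thesis by (simp add: complex_eq_iff cos_60 sin_60)
    qed
    have ab: "a = Complex (1/s) 0" "b = Complex (- (1/2) / s) s" by (simp_all add: a_def b_def s_def mn)
    show ?thesis
    proof (rule main_gen[OF nu r_pos l0 _ _ _ _ half[OF H(2)] XY(2)[OF _ H(3)]], simp_all only: flip: a_def b_def)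
      show "\<exists>m::int. 0 = real_of_int m / real r" by (rule exI[of _ 0]) simp
      show "cis lam * a \<in> lat a b" by (rule lat_memI[of _ 1 _ 1])
        (use s in \<open>simp add: c1 ab r3 s4 complex_eq_iff field_simps\<close>)
      show "cis lam * b \<in> lat a b" by (rule lat_memI[of _ "-1" _ 0])
        (use s in \<open>simp add: c1 ab r3 s4 complex_eq_iff field_simps\<close>)
      show "cis (-lam) * a \<in> lat a b" by (rule lat_memI[of _ 0 _ "-1"])
        (use s in \<open>simp add: c2 ab r3 s4 complex_eq_iff field_simps\<close>)
      show "cis (-lam) * b \<in> lat a b" by (rule lat_memI[of _ 1 _ 1])
        (use s in \<open>simp add: c2 ab r3 s4 complex_eq_iff field_simps\<close>)
    qed
  next
    assume h: "\<exists>k::int. lam = 2*pi/3 + 2*pi*real_of_int k"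
    then obtain k :: int where k: "lam = 2*pi/3 + 2*pi*real_of_int k" by blast
    have H: "Complex mu nu = cis (pi/3)" "\<exists>m::int. x0 = real_of_int m / real r" "\<exists>m::int. y0 = 1/2 + real_of_int m / real r"
      using case_iv h by auto
    have mn: "mu = 1/2" "nu = sqrt 3 / 2" using H(1) by (simp_all add: complex_eq_iff cos_60 sin_60)
    have nu: "nu > 0" unfolding mn(2) by simp
    have s: "s > 0" "s * s = sqrt 3 / 2" using nu by (simp_all add: s_def mn)
    have r3: "sqrt 3 = 2 * s * s" using s(2) by simp
    have s4: "s * (s * (s * (s * 4))) = 3"
    proof -
      have "s * (s * (s * (s * 4))) = 4 * (s * s) * (s * s)" by (simp add: algebra_simps)
      also have "\<dots> = 4 * (sqrt 3 / 2) * (sqrt 3 / 2)" by (simp only: s(2))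
      also have "\<dots> = 3" by simp
      finally show ?thesis .
    qed
    have l0: "lam \<noteq> 0"
    proof
      assume "lam = 0"
      then have "pi * (2/3 + 2 * real_of_int k) = 0" using k by (simp add: algebra_simps)
      then have "2/3 + 2 * real_of_int k = 0" by simp
      then have "real_of_int (3 * k + 1) = 0" by simp
      then show False by presburger
    qed
    have c1: "cis lam = Complex (-1/2) (sqrt 3 / 2)"
    proof -
      have "cis lam = cis (2*pi/3) * cis (2 * pi * real_of_int k)" by (simp only: k cis_mult)
      then show ?thesis by (simp add: complex_eq_iff cos_120 sin_120)
    qed
    have c2: "cis (-lam) = Complex (-1/2) (- sqrt 3 / 2)"
    proof -
      have "-lam = -(2*pi/3) + 2 * pi * real_of_int (-k)" by (simp add: k)
      then have "cis (-lam) = cis (-(2*pi/3)) * cis (2 * pi * real_of_int (-k))" by (simp only: cis_mult)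
      then show ?thesis by (simp add: complex_eq_iff cos_120 sin_120)
    qed
    have ab: "a = Complex (1/s) 0" "b = Complex (- (1/2) / s) s" by (simp_all add: a_def b_def s_def mn)
    show ?thesis
    proof (rule main_gen[OF nu r_pos l0 _ _ _ _ XY(1)[OF H(2)] half[OF H(3)]], simp_all only: flip: a_def b_def)
      show "\<exists>m::int. 0 = real_of_int m / real r" by (rule exI[of _ 0]) simp
      show "cis lam * a \<in> lat a b" by (rule lat_memI[of _ 0 _ 1])
        (use s in \<open>simp add: c1 ab r3 s4 complex_eq_iff field_simps\<close>)
      show "cis lam * b \<in> lat a b" by (rule lat_memI[of _ "-1" _ "-1"])
        (use s in \<open>simp add: c1 ab r3 s4 complex_eq_iff field_simps\<close>)
      show "cis (-lam) * a \<in> lat a b" by (rule lat_memI[of _ "-1" _ "-1"])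
        (use s in \<open>simp add: c2 ab r3 s4 complex_eq_iff field_simps\<close>)
      show "cis (-lam) * b \<in> lat a b" by (rule lat_memI[of _ 1 _ 0])
        (use s in \<open>simp add: c2 ab r3 s4 complex_eq_iff field_simps\<close>)
    qed
  qed
qed


end
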